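(* Let $I$ be a closed interval, and let $F=(f,g)\colon I\to\mathbb{R}^2$ and $G\colon\mathbb{R}^2\to I$ be continuous functions such that $\mathscr{L}_{F,G}$ is a repetition invariant mean on $I$ without a negligible element. Suppose additionally that $g$ is positive on $I$. Then $f/g$ is injective on $I$.
   Context: A mean on $I$ is a function $\mathscr{M}\colon\bigcup_{n\ge1}I^n\to I$ with $\min(a)\le\mathscr{M}(a)\le\max(a)$. Here $\mathscr{L}_{F,G}(a_1,\dots,a_n):=G(F(a_1)+\cdots+F(a_n))$. $\mathscr{M}$ is repetition invariant if $\mathscr{M}(x_1,\dots,x_1,\dots,x_n,\dots,x_n)=\mathscr{M}(x_1,\dots,x_n)$ for all $n,m\in\mathbb{N}$ and $(x_1,\dots,x_n)\in I^n$, each $x_i$ repeated $m$ times on the left. An element $e\in I$ is a negligible element of $\mathscr{M}$ if for every $a=(a_1,\dots,a_n)\in I^n$ with $n\ge2$ and every $s$ with $a_s=e$, $\mathscr{M}(a)=\mathscr{M}((a_i)_{i\ne s})$. *)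

theory Defs
  imports "HOL-Analysis.Analysis"
begin

definition quasi_sum_mean :: "(real \<Rightarrow> real \<times> real) \<Rightarrow> (real \<times> real \<Rightarrow> real) \<Rightarrow> real list \<Rightarrow> real" where
  "quasi_sum_mean F G xs = G (sum_list (map F xs))"

definition is_mean_on :: "real set \<Rightarrow> (real list \<Rightarrow> real) \<Rightarrow> bool" where
  "is_mean_on I M \<longleftrightarrow> (\<forall>xs. xs \<noteq> [] \<and> set xs \<subseteq> I \<longrightarrow>
      M xs \<in> I \<and> Min (set xs) \<le> M xs \<and> M xs \<le> Max (set xs))"

definition repetition_invariant_on :: "real set \<Rightarrow> (real list \<Rightarrow> real) \<Rightarrow> bool" where
  "repetition_invariant_on I M \<longleftrightarrow> (\<forall>xs m. xs \<noteq> [] \<and> set xs \<subseteq> I \<and> 1 \<le> m \<longrightarrow>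
      M (concat (map (replicate m) xs)) = M xs)"

definition negligible_element :: "real set \<Rightarrow> (real list \<Rightarrow> real) \<Rightarrow> real \<Rightarrow> bool" where
  "negligible_element I M e \<longleftrightarrow> e \<in> I \<and> (\<forall>xs s. set xs \<subseteq> I \<and> 2 \<le> length xs \<and> s < length xs \<and> xs ! s = e \<longrightarrow>
      M xs = M (take s xs @ drop (Suc s) xs))"

end

theory Submission imports Defs "HOL-Analysis.Fashoda_Theorem" begin

definition pt :: "real \<Rightarrow> real \<Rightarrow> real^2" where
  "pt a b = (\<chi> i. if i = 1 then a else b)"

lemma pt_nth[simp]: "pt a b $ 1 = a" "pt a b $ 2 = b"
  unfolding pt_def by auto

lemma pt_eq_iff: "z = pt a b \<longleftrightarrow> z $ 1 = a \<and> z $ 2 = b"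
  by (auto simp: vec_eq_iff forall_2)

lemma continuous_on_pt[continuous_intros]:
  "continuous_on S f \<Longrightarrow> continuous_on S g \<Longrightarrow> continuous_on S (\<lambda>x. pt (f x) (g x))"
  unfolding pt_def by (intro continuous_on_vec_lambda, case_tac "i = 1") simp_all

lemma segment_flat:
  fixes u v d :: real
  assumes "z \<in> closed_segment (pt u d) (pt v d)"
  shows "z $ 2 = d \<and> min u v \<le> z $ 1 \<and> z $ 1 \<le> max u v"
proof -
  obtain w where w: "0 \<le> w" "w \<le> 1" "z = (1 - w) *\<^sub>R pt u d + w *\<^sub>R pt v d"
    using assms by (auto simp: in_segment)
  have "z $ 2 = (1 - w) * d + w * d" "z $ 1 = (1 - w) * u + w * v" using w(3) by auto
  moreover have "(1 - w) * d + w * d = d" by (simp add: algebra_simps)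
  moreover have "min u v \<le> (1 - w) * u + w * v \<and> (1 - w) * u + w * v \<le> max u v"
  proof -
    have e: "(1 - w) * u + w * v = u + w * (v - u)" by (simp add: algebra_simps)
    show ?thesis
    proof (cases "u \<le> v")
      case True
      have "0 \<le> w * (v - u)" using True w(1) by simp
      moreover have "w * (v - u) \<le> 1 * (v - u)"
        using True w(2) by (intro mult_right_mono) auto
      ultimately show ?thesis unfolding e using True by auto
    next
      case False
      have a1: "w * (v - u) \<le> 0" using False w(1) by (simp add: mult_nonneg_nonpos)
      have a2: "1 * (v - u) \<le> w * (v - u)"
        using False w(2) by (intro mult_right_mono_neg) auto
      have "min u v = v" "max u v = u" using False by auto
      then show ?thesis unfolding e using a1 a2 by simp
    qed
  qed
  ultimately show ?thesis by simp
qed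

lemma reparam_cont:
  fixes x y :: real
  assumes "continuous_on {x..y} X" "x \<le> y"
  shows "continuous_on {0..1} (\<lambda>u. X (x + u*(y-x)))"
proof (rule continuous_on_compose2[OF assms(1)])
  show "continuous_on {0..1} (\<lambda>u::real. x + u*(y-x))" by (intro continuous_intros)
  show "(\<lambda>u. x + u * (y - x)) ` {0..1} \<subseteq> {x..y}"
  proof
    fix z assume "z \<in> (\<lambda>u. x + u * (y - x)) ` {0..1}"
    then obtain u where u: "0 \<le> u" "u \<le> 1" "z = x + u*(y-x)" by auto
    have "u*(y-x) \<le> 1*(y-x)" using u assms(2) by (intro mult_right_mono) auto
    moreover have "0 \<le> u*(y-x)" using u assms(2) by simp
    ultimately show "z \<in> {x..y}" using u by auto
  qed
qed

lemma reparam_range: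
  fixes x y u :: real
  assumes "x \<le> y" "0 \<le> u" "u \<le> 1"
  shows "x + u*(y-x) \<in> {x..y}"
proof -
  have "u*(y-x) \<le> 1*(y-x)" using assms by (intro mult_right_mono) auto
  moreover have "0 \<le> u*(y-x)" using assms by simp
  ultimately show ?thesis by auto
qed

lemma arch0:
  fixes X Y :: "real \<Rightarrow> real"
  assumes xm: "x < m" and my: "m < y"
    and cX: "continuous_on {x..y} X" and cY: "continuous_on {x..y} Y"
    and Yx: "Y x = d0" and Yy: "Y y = d0"
    and Ypos: "\<forall>s. x < s \<and> s < y \<longrightarrow> d0 < Y s"
    and Ymax: "\<forall>s\<in>{x..y}. Y s \<le> Y m"
    and r1: "1 < r" and Xx: "0 < X x" and rX: "r * X x < X y"
  shows "\<exists>s\<in>{x..y}. \<exists>t\<in>{x..m}. Y s = Y t \<and> X s = r * X t"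
proof -
  have cA: "continuous_on {x..y} (\<lambda>s. \<bar>X s\<bar>)" using cX by (intro continuous_intros)
  obtain s0 where "s0 \<in> {x..y}" and s0: "\<forall>s\<in>{x..y}. \<bar>X s\<bar> \<le> \<bar>X s0\<bar>"
    using continuous_attains_sup[OF compact_Icc _ cA] xm my by force
  define K where "K = \<bar>X s0\<bar>"
  have K: "\<And>s. s \<in> {x..y} \<Longrightarrow> \<bar>X s\<bar> \<le> K" "0 \<le> K" using s0 by (auto simp: K_def)
  define A where "A = - (r+1)*K - 1"
  define B where "B = (r+1)*K + 1"
  have AB: "A \<le> X s" "X s \<le> B" "A \<le> r * X s" "r * X s \<le> B" if "s \<in> {x..y}" for s
  proof -
    have k: "\<bar>X s\<bar> \<le> K" using K that by auto
    have k1: "- K \<le> X s" "X s \<le> K" using k by auto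
    have "r * X s \<le> r * K" using k1 r1 by (intro mult_left_mono) auto
    moreover have "r * (- K) \<le> r * X s" using k1 r1 by (intro mult_left_mono) auto
    moreover have "(r+1)*K = r*K + K" by (simp add: algebra_simps)
    moreover have "0 \<le> r * K" using K(2) r1 by simp
    ultimately show "A \<le> X s" "X s \<le> B" "A \<le> r * X s" "r * X s \<le> B"
      using k1 unfolding A_def B_def by (simp_all add: algebra_simps)
  qed
  define P where "P = (\<lambda>s. pt (X s) (Y s))"
  define \<gamma> where "\<gamma> = (\<lambda>u. P (x + u*(y-x)))"
  define gg where "gg = (\<lambda>u. pt (r * X (x + u*(m-x))) (Y (x + u*(m-x))))"
  define l1 where "l1 = linepath (pt A d0) (P x)"
  define l2 where "l2 = linepath (P y) (pt B d0)"
  define ff where "ff = l1 +++ \<gamma> +++ l2"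
  define a where "a = pt A d0"
  define b where "b = pt B (Y m)"
  have xy: "x \<le> y" "x \<le> m" "m \<le> y" using xm my by auto
  have cXm: "continuous_on {x..m} X" "continuous_on {x..m} Y"
    using cX cY xy by (auto intro: continuous_on_subset)
  have p\<gamma>: "path \<gamma>" unfolding path_def \<gamma>_def P_def
    by (intro continuous_on_pt reparam_cont cX cY xy)
  have pgg: "path gg" unfolding path_def gg_def
    by (intro continuous_on_pt reparam_cont cXm xy continuous_on_mult_left)
  have s\<gamma>: "pathstart \<gamma> = P x" "pathfinish \<gamma> = P y"
    unfolding pathstart_def pathfinish_def \<gamma>_def by auto
  have pff: "path ff" unfolding ff_def l1_def l2_def
    using p\<gamma> s\<gamma> by simp
  have img_ff: "path_image ff = closed_segment (pt A d0) (P x) \<union> (path_image \<gamma> \<union> closed_segment (P y) (pt B d0))"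
    unfolding ff_def l1_def l2_def using s\<gamma> by (simp add: path_image_join)
  have img\<gamma>: "\<exists>s\<in>{x..y}. z = P s" if "z \<in> path_image \<gamma>" for z
    using that reparam_range[OF xy(1)] unfolding path_image_def \<gamma>_def by auto
  have imggg: "\<exists>t\<in>{x..m}. z = pt (r * X t) (Y t)" if "z \<in> path_image gg" for z
    using that reparam_range[OF xy(2)] unfolding path_image_def gg_def by auto
  have Px: "P x = pt (X x) d0" "P y = pt (X y) d0" unfolding P_def using Yx Yy by auto
  have Ybd: "d0 \<le> Y s \<and> Y s \<le> Y m" if "s \<in> {x..y}" for s
    using that Ypos Ymax Yx Yy by (cases "s = x \<or> s = y") (auto simp: less_eq_real_def)
  have XA: "A \<le> X x" "X y \<le> B" using AB xy by auto
  have seg: "z $ 2 = d0 \<and> A \<le> z $ 1 \<and> (z $ 1 \<le> X x \<or> X y \<le> z $ 1) \<and> z $ 1 \<le> B"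
    if "z \<in> closed_segment (pt A d0) (pt (X x) d0) \<or> z \<in> closed_segment (pt (X y) d0) (pt B d0)" for z
    using that
  proof
    assume h: "z \<in> closed_segment (pt A d0) (pt (X x) d0)"
    show ?thesis using segment_flat[OF h] XA AB[of x] xy by (auto simp: min_def max_def)
  next
    assume h: "z \<in> closed_segment (pt (X y) d0) (pt B d0)"
    show ?thesis using segment_flat[OF h] XA AB[of y] xy by (auto simp: min_def max_def)
  qed
  have "path_image ff \<subseteq> cbox a b"
  proof
    fix z assume z: "z \<in> path_image ff"
    show "z \<in> cbox a b"
    proof (cases "z \<in> path_image \<gamma>")
      case True
      then obtain s where "s \<in> {x..y}" "z = P s" using img\<gamma> by blast
      then show ?thesis using AB Ybd unfolding mem_box_cart a_def b_def forall_2 P_def by auto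
    next
      case False
      then have "z \<in> closed_segment (pt A d0) (pt (X x) d0) \<or> z \<in> closed_segment (pt (X y) d0) (pt B d0)"
        using z img_ff Px by auto
      then show ?thesis using seg[of z] Ybd[of m] xy
        unfolding mem_box_cart a_def b_def forall_2 by auto
    qed
  qed
  moreover have "path_image gg \<subseteq> cbox a b"
  proof
    fix z assume "z \<in> path_image gg"
    then obtain t where "t \<in> {x..m}" "z = pt (r * X t) (Y t)" using imggg by blast
    moreover then have "t \<in> {x..y}" using xy by auto
    ultimately show "z \<in> cbox a b" using AB Ybd unfolding mem_box_cart a_def b_def forall_2 by auto
  qed
  moreover have "pathstart ff $ 1 = a $ 1" "pathfinish ff $ 1 = b $ 1"
    unfolding ff_def l1_def l2_def a_def b_def by auto
  moreover have "pathstart gg $ 2 = a $ 2" "pathfinish gg $ 2 = b $ 2"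
    unfolding gg_def pathstart_def pathfinish_def a_def b_def using Yx by auto
  ultimately obtain z where z1: "z \<in> path_image ff" and z2: "z \<in> path_image gg"
    using fashoda[OF pff pgg] by metis
  obtain t where t: "t \<in> {x..m}" "z = pt (r * X t) (Y t)" using imggg z2 by blast
  have "z \<in> path_image \<gamma>"
  proof (rule ccontr)
    assume "z \<notin> path_image \<gamma>"
    then have zz: "z \<in> closed_segment (pt A d0) (pt (X x) d0) \<or> z \<in> closed_segment (pt (X y) d0) (pt B d0)"
      using z1 img_ff Px by auto
    then have "Y t = d0" using seg[of z] t by auto
    then have "t = x"
    proof -
      assume "Y t = d0"
      have "t \<ge> x" "t \<le> m" using t by auto
      moreover have "\<not> (x < t \<and> t < y)" using Ypos \<open>Y t = d0\<close> by fastforce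
      ultimately show "t = x" using my by linarith
    qed
    then have "z $ 1 = r * X x" using t by simp
    moreover have "X x < r * X x" using r1 Xx by simp
    ultimately show False using seg[OF zz] rX by auto
  qed
  then obtain s where s: "s \<in> {x..y}" "z = P s" using img\<gamma> by blast
  have "Y s = Y t \<and> X s = r * X t" using s t unfolding P_def pt_eq_iff by auto
  then show ?thesis using s(1) t(1) by blast
qed


lemma rat_between:
  fixes c :: real
  assumes "1 < c"
  shows "\<exists>p q::nat. 0 < p \<and> 0 < q \<and> 1 < real q / real p \<and> real q / real p < c"
proof -
  obtain r where r: "r \<in> \<rat>" "1 < r" "r < c" using Rats_dense_in_real[OF assms] by blast
  obtain i j :: int where ij: "0 < j" "r = of_int i / of_int j" using Rats_cases'[OF r(1)] by metis
  have "0 < i" using ij r(2)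
    by (metis divide_nonpos_pos of_int_0_less_iff less_trans not_le zero_less_one)
  define p where "p = nat j"
  define q where "q = nat i"
  have "real q / real p = r" unfolding p_def q_def using ij \<open>0 < i\<close> by simp
  then show ?thesis using ij \<open>0 < i\<close> r unfolding p_def q_def by (intro exI[of _ "nat j"] exI[of _ "nat i"]) auto
qed

lemma contra:
  fixes X Y :: "real \<Rightarrow> real"
  assumes H: "\<forall>s\<in>{x..y}. \<forall>t\<in>{x..y}. \<forall>p q::nat. 0 < p \<longrightarrow> 0 < q \<longrightarrow> Y s = Y t \<longrightarrow> real p * X s = real q * X t \<longrightarrow> s = t"
    and Xpos: "\<forall>s\<in>{x..y}. 0 < X s"
    and st: "s \<in> {x..y}" "t \<in> {x..y}" and pq: "0 < p" "0 < q" "1 < real q / real p"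
    and Y: "Y s = Y t" and X: "X s = real q / real p * X t"
  shows False
proof -
  have "real p * X s = real q * X t" using X pq by (simp add: field_simps)
  then have "s = t" using H st pq Y by blast
  then have "X t = real q / real p * X t" using X by simp
  then have "(real q / real p - 1) * X t = 0" by (simp add: algebra_simps)
  moreover have "0 < X t" using Xpos st by auto
  ultimately have "real q / real p - 1 = 0" by simp
  then show False using pq(3) by simp
qed

lemma archB:
  fixes X Y :: "real \<Rightarrow> real"
  assumes xy: "x < y" and cX: "continuous_on {x..y} X" and cY: "continuous_on {x..y} Y"
    and Xpos: "\<forall>s\<in>{x..y}. 0 < X s" and Yxy: "Y x = Y y"
    and ex: "\<exists>z\<in>{x..y}. Y x < Y z"
    and H: "\<forall>s\<in>{x..y}. \<forall>t\<in>{x..y}. \<forall>p q::nat. 0 < p \<longrightarrow> 0 < q \<longrightarrow> Y s = Y t \<longrightarrow> real p * X s = real q * X t \<longrightarrow> s = t"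
  shows False
proof -
  define d0 where "d0 = Y x"
  obtain m where m: "m \<in> {x..y}" "\<forall>s\<in>{x..y}. Y s \<le> Y m"
    using continuous_attains_sup[OF compact_Icc _ cY] xy by force
  have Ym: "d0 < Y m" using ex m unfolding d0_def by force
  have xm: "x < m" using m Ym unfolding d0_def by (cases "m = x") auto
  have my: "m < y" using m Ym Yxy unfolding d0_def by (cases "m = y") auto
  define S1 where "S1 = {s \<in> {x..m}. Y s = d0}"
  define S2 where "S2 = {s \<in> {m..y}. Y s = d0}"
  have cY1: "continuous_on {x..m} Y" "continuous_on {m..y} Y"
    using cY m by (auto intro: continuous_on_subset)
  have "closed S1" unfolding S1_def by (rule continuous_closed_preimage_constant[OF cY1(1)]) simp
  then have cS1: "compact S1"
  proof -
    assume c: "closed S1"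
    have e: "S1 = {x..m} \<inter> S1" unfolding S1_def by auto
    show ?thesis using compact_Int_closed[OF compact_Icc c] e by metis
  qed
  have "closed S2" unfolding S2_def by (rule continuous_closed_preimage_constant[OF cY1(2)]) simp
  then have cS2: "compact S2"
  proof -
    assume c: "closed S2"
    have e: "S2 = {m..y} \<inter> S2" unfolding S2_def by auto
    show ?thesis using compact_Int_closed[OF compact_Icc c] e by metis
  qed
  have "x \<in> S1" unfolding S1_def d0_def using xm by auto
  then obtain x' where x': "x' \<in> S1" "\<forall>s\<in>S1. s \<le> x'"
    using continuous_attains_sup[OF cS1 _ continuous_on_id] by blast
  have "y \<in> S2" unfolding S2_def d0_def using my Yxy by auto
  then obtain y' where y': "y' \<in> S2" "\<forall>s\<in>S2. y' \<le> s"
    using continuous_attains_inf[OF cS2 _ continuous_on_id] by blast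
  have x'm0: "x \<le> x'" "x' \<le> m" "Y x' = d0" using x'(1) unfolding S1_def by auto
  have "x' \<noteq> m" using x'm0(3) Ym by auto
  then have x'm: "x \<le> x'" "x' < m" "Y x' = d0" using x'm0 by auto
  have my'0: "m \<le> y'" "y' \<le> y" "Y y' = d0" using y'(1) unfolding S2_def by auto
  have "y' \<noteq> m" using my'0(3) Ym by auto
  then have my': "m < y'" "y' \<le> y" "Y y' = d0" using my'0 by auto
  have Ypos: "\<forall>s. x' < s \<and> s < y' \<longrightarrow> d0 < Y s"
  proof (intro allI impI, rule ccontr)
    fix s assume s: "x' < s \<and> s < y'" and "\<not> d0 < Y s"
    then have Ys: "Y s \<le> d0" by simp
    show False
    proof (cases "s \<le> m")
      case True
      have "{s..m} \<subseteq> {x..m}" using x'm s by auto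
      then have c: "continuous_on {s..m} Y" using continuous_on_subset[OF cY1(1)] by blast
      obtain s' where s': "s \<le> s'" "s' \<le> m" "Y s' = d0"
        using IVT'[of Y s d0 m, OF Ys _ True c] Ym by auto
      then have "s' \<in> S1" unfolding S1_def using x'm s by auto
      then have "s' \<le> x'" using x'(2) by blast
      then show False using s s'(1) by linarith
    next
      case False
      have "{m..s} \<subseteq> {m..y}" using my' s by auto
      then have c: "continuous_on {m..s} Y" using continuous_on_subset[OF cY1(2)] by blast
      obtain s' where s': "m \<le> s'" "s' \<le> s" "Y s' = d0"
        using IVT2'[of Y s d0 m, OF Ys _ _ c] Ym False by auto
      then have "s' \<in> S2" unfolding S2_def using my' s by auto
      then have "y' \<le> s'" using y'(2) by blast
      then show False using s s'(2) by linarith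
    qed
  qed
  have sub: "{x'..y'} \<subseteq> {x..y}" using x'm my' by auto
  have Ymax: "\<forall>s\<in>{x'..y'}. Y s \<le> Y m" using m sub by auto
  have cX': "continuous_on {x'..y'} X" "continuous_on {x'..y'} Y"
    using cX cY sub by (auto intro: continuous_on_subset)
  have Xne: "X x' \<noteq> X y'"
  proof
    assume "X x' = X y'"
    then have "x' = y'" using H[rule_format, of x' y' 1 1] sub x'm my' by auto
    then show False using x'm my' by simp
  qed
  have Xp: "0 < X x'" "0 < X y'" using Xpos sub x'm my' by auto
  show False
  proof (cases "X x' < X y'")
    case True
    then have "1 < X y' / X x'" using Xp by simp
    then obtain p q :: nat where pq: "0 < p" "0 < q" "1 < real q / real p" "real q / real p < X y' / X x'"
      using rat_between by blast
    have "real q / real p * X x' < X y'" using pq(4) Xp by (simp add: pos_less_divide_eq)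
    then obtain s t where st: "s \<in> {x'..y'}" "t \<in> {x'..m}" "Y s = Y t" "X s = real q / real p * X t"
      using arch0[OF x'm(2) my'(1) cX' x'm(3) my'(3) Ypos Ymax pq(3) Xp(1)] by blast
    have "s \<in> {x..y}" "t \<in> {x..y}" using st(1,2) sub x'm my' by auto
    then show False using contra[OF H Xpos _ _ pq(1,2,3) st(3,4)] by blast
  next
    case False
    then have "X y' < X x'" using Xne by simp
    then have "1 < X x' / X y'" using Xp by simp
    then obtain p q :: nat where pq: "0 < p" "0 < q" "1 < real q / real p" "real q / real p < X x' / X y'"
      using rat_between by blast
    have rX: "real q / real p * X (- (- y')) < X (- (- x'))" using pq(4) Xp by (simp add: pos_less_divide_eq)
    have neg: "uminus ` {- y'..- x'} \<subseteq> {x'..y'}" by auto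
    have cR: "continuous_on {- y'..- x'} (\<lambda>s. X (- s))" "continuous_on {- y'..- x'} (\<lambda>s. Y (- s))"
      by (intro continuous_on_compose2[OF cX'(1)] continuous_on_compose2[OF cX'(2)] continuous_intros neg)+
    have Ypos': "\<forall>s. - y' < s \<and> s < - x' \<longrightarrow> d0 < Y (- s)" using Ypos by force
    have Ymax': "\<forall>s\<in>{- y'..- x'}. Y (- s) \<le> Y (- (- m))" using Ymax by force
    have "\<exists>s\<in>{- y'..- x'}. \<exists>t\<in>{- y'..- m}. Y (- s) = Y (- t) \<and> X (- s) = real q / real p * X (- t)"
      by (rule arch0[of "- y'" "- m" "- x'" "\<lambda>s. X (- s)" "\<lambda>s. Y (- s)" d0 "real q / real p",
            OF _ _ cR(1) cR(2) _ _ Ypos' Ymax' pq(3) _ rX]) (simp_all add: x'm my' Xp)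
    then obtain s t where st: "s \<in> {- y'..- x'}" "t \<in> {- y'..- m}" "Y (- s) = Y (- t)" "X (- s) = real q / real p * X (- t)"
      by blast
    have "- s \<in> {x..y}" "- t \<in> {x..y}" using st(1,2) sub x'm my' by auto
    then show False using contra[OF H Xpos _ _ pq(1,2,3) st(3,4)] by blast
  qed
qed

lemma no_repeat:
  fixes X Y :: "real \<Rightarrow> real"
  assumes xy: "x < y" and cX: "continuous_on {x..y} X" and cY: "continuous_on {x..y} Y"
    and Xpos: "\<forall>s\<in>{x..y}. 0 < X s" and Yxy: "Y x = Y y"
    and H: "\<forall>s\<in>{x..y}. \<forall>t\<in>{x..y}. \<forall>p q::nat. 0 < p \<longrightarrow> 0 < q \<longrightarrow> Y s = Y t \<longrightarrow> real p * X s = real q * X t \<longrightarrow> s = t"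
  shows False
proof -
  show False
  proof (cases "\<exists>z\<in>{x..y}. Y x < Y z")
    case up: True
    then show False using archB[OF xy cX cY Xpos Yxy _ H] by blast
  next
    case F1: False
    show False
  proof (cases "\<exists>z\<in>{x..y}. Y z < Y x")
    case down: True
    have cY': "continuous_on {x..y} (\<lambda>s. - Y s)" using cY by (intro continuous_intros)
    have H': "\<forall>s\<in>{x..y}. \<forall>t\<in>{x..y}. \<forall>p q::nat. 0 < p \<longrightarrow> 0 < q \<longrightarrow> - Y s = - Y t \<longrightarrow> real p * X s = real q * X t \<longrightarrow> s = t"
      using H by simp
    have "\<exists>z\<in>{x..y}. - Y x < - Y z" using down by auto
    moreover have "- Y x = - Y y" using Yxy by simp
    ultimately show False using archB[OF xy cX cY' Xpos _ _ H'] by blast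
  next
    case F2: False
    have const: "\<forall>z\<in>{x..y}. Y z = Y x"
    proof
      fix z assume "z \<in> {x..y}"
      then have "\<not> Y x < Y z" "\<not> Y z < Y x" using F1 F2 by auto
      then show "Y z = Y x" by linarith
    qed
    have Xne: "X x \<noteq> X y"
    proof
      assume "X x = X y"
      then have "x = y" using H[rule_format, of x y 1 1] xy Yxy by auto
      then show False using xy by simp
    qed
    have Xp: "0 < X x" "0 < X y" using Xpos xy by auto
    show False
    proof (cases "X x < X y")
      case True
      then have "1 < X y / X x" using Xp by simp
      then obtain p q :: nat where pq: "0 < p" "0 < q" "1 < real q / real p" "real q / real p < X y / X x"
        using rat_between by blast
      have r: "real q / real p * X x < X y" using pq(4) Xp by (simp add: pos_less_divide_eq)
      have m1: "X x \<le> real q / real p * X x" using mult_right_mono[of 1 "real q / real p" "X x"] pq(3) Xp by simp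
      obtain t where t: "x \<le> t" "t \<le> y" "X t = real q / real p * X x"
        using IVT'[of X x "real q / real p * X x" y, OF m1 less_imp_le[OF r] less_imp_le[OF xy] cX] by blast
      have ht: "t \<in> {x..y}" "x \<in> {x..y}" using t xy by auto
      have "Y t = Y x" by (rule const[rule_format, OF ht(1)])
      then show False by (rule contra[OF H Xpos ht pq(1,2,3) _ t(3)])
    next
      case False
      then have "X y < X x" using Xne by simp
      then have "1 < X x / X y" using Xp by simp
      then obtain p q :: nat where pq: "0 < p" "0 < q" "1 < real q / real p" "real q / real p < X x / X y"
        using rat_between by blast
      have r: "real q / real p * X y < X x" using pq(4) Xp by (simp add: pos_less_divide_eq)
      have m1: "X y \<le> real q / real p * X y" using mult_right_mono[of 1 "real q / real p" "X y"] pq(3) Xp by simp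
      obtain t where t: "x \<le> t" "t \<le> y" "X t = real q / real p * X y"
        using IVT2'[of X y "real q / real p * X y" x, OF m1 less_imp_le[OF r] less_imp_le[OF xy] cX] by blast
      have ht: "t \<in> {x..y}" "y \<in> {x..y}" using t xy by auto
      have "Y t = Y y" using const[rule_format, OF ht(1)] Yxy by simp
      then show False by (rule contra[OF H Xpos ht pq(1,2,3) _ t(3)])
    qed
  qed
  qed
qed

lemma sum_list_rep_pair: "sum_list (replicate n (u, v)) = (real n * u, real n * v)"
  by (induction n) (auto simp: algebra_simps zero_prod_def)

theorem lemma5p4:
  fixes a b :: real and f g :: "real \<Rightarrow> real" and G :: "real \<times> real \<Rightarrow> real"
  assumes "a \<le> b"
    and "continuous_on {a..b} f" and "continuous_on {a..b} g"
    and "continuous_on UNIV G" and "\<forall>p. G p \<in> {a..b}"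
    and "is_mean_on {a..b} (quasi_sum_mean (\<lambda>x. (f x, g x)) G)"
    and "repetition_invariant_on {a..b} (quasi_sum_mean (\<lambda>x. (f x, g x)) G)"
    and "\<not> (\<exists>e. negligible_element {a..b} (quasi_sum_mean (\<lambda>x. (f x, g x)) G) e)"
    and "\<forall>x\<in>{a..b}. g x > 0"
  shows "inj_on (\<lambda>x. f x / g x) {a..b}"
proof -
  have Fm: "G (f z, g z) = z" if "z \<in> {a..b}" for z
  proof -
    have "[z] \<noteq> [] \<and> set [z] \<subseteq> {a..b}" using that by auto
    then have "Min (set [z]) \<le> quasi_sum_mean (\<lambda>x. (f x, g x)) G [z] \<and> quasi_sum_mean (\<lambda>x. (f x, g x)) G [z] \<le> Max (set [z])"
      using assms(6) unfolding is_mean_on_def by blast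
    then have "z \<le> G (f z, g z) \<and> G (f z, g z) \<le> z" by (simp add: quasi_sum_mean_def)
    then show ?thesis by linarith
  qed
  have Frep: "G (real p * f z, real p * g z) = z" if "z \<in> {a..b}" "0 < p" for z p
  proof -
    have "quasi_sum_mean (\<lambda>x. (f x, g x)) G (concat (map (replicate p) [z])) = quasi_sum_mean (\<lambda>x. (f x, g x)) G [z]"
      using assms(7)[unfolded repetition_invariant_on_def, rule_format, of "[z]" p] that by simp
    then have "G (real p * f z, real p * g z) = G (f z, g z)"
      unfolding quasi_sum_mean_def by (simp add: map_replicate sum_list_rep_pair)
    then show ?thesis using Fm that by simp
  qed
  have Kf: "s = t" if st: "s \<in> {a..b}" "t \<in> {a..b}" and pq: "0 < p" "0 < q"
    and phi: "f s / g s = f t / g t" and pg: "real p * g s = real q * g t" for s t p q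
  proof -
    have gp: "0 < g s" "0 < g t" using assms(9) st by auto
    have "real p * f s = (f s / g s) * (real p * g s)" using gp by (simp add: field_simps)
    also have "\<dots> = (f t / g t) * (real q * g t)" using phi pg by simp
    also have "\<dots> = real q * f t" using gp by (simp add: field_simps)
    finally have "G (real p * f s, real p * g s) = G (real q * f t, real q * g t)" using pg by simp
    moreover have "G (real p * f s, real p * g s) = s" by (rule Frep[OF st(1) pq(1)])
    moreover have "G (real q * f t, real q * g t) = t" by (rule Frep[OF st(2) pq(2)])
    ultimately show "s = t" by simp
  qed
  have main: False if xy: "x \<in> {a..b}" "y \<in> {a..b}" "x < y" "f x / g x = f y / g y" for x y
  proof -
    have sub: "{x..y} \<subseteq> {a..b}" using xy by auto
    have cg: "continuous_on {x..y} g" "continuous_on {x..y} f"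
      using assms(2,3) sub by (auto intro: continuous_on_subset)
    have gnz: "\<forall>s\<in>{x..y}. g s \<noteq> 0" using assms(9) sub by fastforce
    have cphi: "continuous_on {x..y} (\<lambda>s. f s / g s)"
      using cg gnz by (intro continuous_on_divide) auto
    show False
    proof (rule no_repeat[OF xy(3) cg(1) cphi])
      show "\<forall>s\<in>{x..y}. 0 < g s" using assms(9) sub by auto
      show "f x / g x = f y / g y" by fact
      show "\<forall>s\<in>{x..y}. \<forall>t\<in>{x..y}. \<forall>p q::nat. 0 < p \<longrightarrow> 0 < q \<longrightarrow> f s / g s = f t / g t \<longrightarrow> real p * g s = real q * g t \<longrightarrow> s = t"
      proof (intro ballI allI impI)
        fix s t p q assume h: "s \<in> {x..y}" "t \<in> {x..y}" "0 < (p::nat)" "0 < (q::nat)"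
          "f s / g s = f t / g t" "real p * g s = real q * g t"
        have "s \<in> {a..b}" "t \<in> {a..b}" using h(1,2) sub by auto
        then show "s = t" by (rule Kf[OF _ _ h(3,4,5,6)])
      qed
    qed
  qed
  show ?thesis
    unfolding inj_on_def
  proof (intro ballI impI)
    fix x y assume h: "x \<in> {a..b}" "y \<in> {a..b}" "f x / g x = f y / g y"
    show "x = y"
    proof (rule ccontr)
      assume "x \<noteq> y"
      then have "x < y \<or> y < x" by linarith
      then show False
      proof
        assume "x < y"
        then show False by (rule main[OF h(1,2) _ h(3)])
      next
        assume "y < x"
        then show False by (rule main[OF h(2,1) _ h(3)[symmetric]])
      qed
    qed
  qed
qed

end
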